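(* Let $f(a,b,c,d,e,x,y)$ be analytic in a neighbourhood of the origin of $\mathbb{C}^7$, and for fixed $(a,b,c,d,e)$ write $F(X,Y)=f(a,b,c,d,e,X,Y)$. The following are equivalent. (i) In some neighbourhood of the origin, $f$ satisfies $$x\Big\{F(x,y)-F(x,yq)-(d+e)q^{-1}\big[F(x,yq)-F(x,yq^2)\big]+de\,q^{-2}\big[F(x,yq^2)-F(x,yq^3)\big]\Big\}$$ $$=y\Big\{\big[F(x,y)-F(xq,y)\big]-(a+b+c)\big[F(x,yq)-F(xq,yq)\big]+(ab+ac+bc)\big[F(x,yq^2)-F(xq,yq^2)\big]-abc\big[F(x,yq^3)-F(xq,yq^3)\big]\Big\}.$$ (ii) $f$ can be expanded in terms of the polynomials $\phi_n^{(a,b,c;d,e)}(x,y|q)$. That is, there exist functions $\mu_n=\mu_n(a,b,c,d,e)$, $n\ge 0$, defined near the origin of $\mathbb{C}^5$, such that $$f(a,b,c,d,e,x,y)=\sum_{n\ge0}\mu_n\,\phi_n^{(a,b,c;d,e)}(x,y|q).$$ This identity is meant as an identity of power series in $(x,y)$: for all $j,k\ge0$, the coefficient of $x^jy^k$ in the Taylor expansion of $f$ in $(x,y)$ equals $\mu_{j+k}$ times the coefficient of $x^jy^k$ in $\phi_{j+k}^{(a,b,c;d,e)}(x,y|q)$. Moreover, in this case $\sum_n\mu_n x^n=f(a,b,c,d,e,x,0)$.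
   Context: Throughout, $0<q<1$. For $\alpha\in\mathbb{C}$, $(\alpha;q)_0=1$, $(\alpha;q)_n=\prod_{j=0}^{n-1}(1-\alpha q^j)$ and $(\alpha;q)_\infty=\prod_{j\ge0}(1-\alpha q^j)$. Also $(\alpha_1,\dots,\alpha_r;q)_n=\prod_i(\alpha_i;q)_n$. The $q$-binomial coefficient is $\begin{bmatrix}n\\k\end{bmatrix}=\frac{(q;q)_n}{(q;q)_k(q;q)_{n-k}}$. The generalized Al-Salam–Carlitz polynomials are $$\phi_n^{(a,b,c;d,e)}(x,y|q)=\sum_{k=0}^n\begin{bmatrix}n\\k\end{bmatrix}\frac{(a,b,c;q)_k}{(d,e;q)_k}x^{n-k}y^k,$$ defined whenever $d,e\notin\{q^{-m}:m\ge0\}$ (in particular near $d=e=0$). *)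

theory Defs
  imports "HOL-Analysis.Analysis"
begin

type_synonym fun7 = "complex \<Rightarrow> complex \<Rightarrow> complex \<Rightarrow> complex \<Rightarrow> complex \<Rightarrow> complex \<Rightarrow> complex \<Rightarrow> complex"

definition qpoch :: "complex \<Rightarrow> real \<Rightarrow> nat \<Rightarrow> complex" where
  "qpoch \<alpha> q n = (\<Prod>j<n. 1 - \<alpha> * complex_of_real q ^ j)"

definition qbinom :: "real \<Rightarrow> nat \<Rightarrow> nat \<Rightarrow> complex" where
  "qbinom q n k = qpoch (complex_of_real q) q n / (qpoch (complex_of_real q) q k * qpoch (complex_of_real q) q (n - k))"

definition phi_coeff :: "real \<Rightarrow> complex \<Rightarrow> complex \<Rightarrow> complex \<Rightarrow> complex \<Rightarrow> complex \<Rightarrow> nat \<Rightarrow> nat \<Rightarrow> complex" where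
  "phi_coeff q a b c d e n k =
     qbinom q n k * (qpoch a q k * qpoch b q k * qpoch c q k) / (qpoch d q k * qpoch e q k)"

definition phi :: "real \<Rightarrow> complex \<Rightarrow> complex \<Rightarrow> complex \<Rightarrow> complex \<Rightarrow> complex \<Rightarrow> nat \<Rightarrow> complex \<Rightarrow> complex \<Rightarrow> complex" where
  "phi q a b c d e n x y = (\<Sum>k\<le>n. phi_coeff q a b c d e n k * x ^ (n - k) * y ^ k)"

text \<open>Analyticity in a neighbourhood of the origin of C^7: f is given by an
  (unconditionally, hence absolutely) convergent power series on some polydisc around 0.\<close>
definition analytic_near0_7 :: "fun7 \<Rightarrow> bool" where
  "analytic_near0_7 f \<longleftrightarrow>
     (\<exists>r>0. \<exists>C :: nat \<times> nat \<times> nat \<times> nat \<times> nat \<times> nat \<times> nat \<Rightarrow> complex.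
        \<forall>a b c d e x y. norm a < r \<and> norm b < r \<and> norm c < r \<and> norm d < r \<and> norm e < r
            \<and> norm x < r \<and> norm y < r \<longrightarrow>
          ((\<lambda>(i1, i2, i3, i4, i5, i6, i7).
               C (i1, i2, i3, i4, i5, i6, i7) * a ^ i1 * b ^ i2 * c ^ i3 * d ^ i4 * e ^ i5
                 * x ^ i6 * y ^ i7) has_sum f a b c d e x y) UNIV)"

definition xy_coeff :: "fun7 \<Rightarrow> complex \<Rightarrow> complex \<Rightarrow> complex \<Rightarrow> complex \<Rightarrow> complex \<Rightarrow> nat \<Rightarrow> nat \<Rightarrow> complex" where
  "xy_coeff f a b c d e j k =
     (deriv ^^ j) (\<lambda>X. (deriv ^^ k) (\<lambda>Y. f a b c d e X Y) 0) 0 / (fact j * fact k)"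

definition qdiff_eq :: "real \<Rightarrow> fun7 \<Rightarrow> complex \<Rightarrow> complex \<Rightarrow> complex \<Rightarrow> complex \<Rightarrow> complex \<Rightarrow> complex \<Rightarrow> complex \<Rightarrow> bool" where
  "qdiff_eq q f a b c d e x y \<longleftrightarrow>
     (let F = f a b c d e; Q = complex_of_real q in
      x * ( F x y - F x (y * Q)
            - (d + e) / Q * (F x (y * Q) - F x (y * Q ^ 2))
            + d * e / Q ^ 2 * (F x (y * Q ^ 2) - F x (y * Q ^ 3)))
      = y * ( (F x y - F (x * Q) y)
            - (a + b + c) * (F x (y * Q) - F (x * Q) (y * Q))
            + (a * b + a * c + b * c) * (F x (y * Q ^ 2) - F (x * Q) (y * Q ^ 2))
            - a * b * c * (F x (y * Q ^ 3) - F (x * Q) (y * Q ^ 3))))"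

end

theory Submission
  imports Defs
begin


definition dps :: "(nat \<times> nat \<Rightarrow> complex) \<Rightarrow> real \<Rightarrow> (complex \<Rightarrow> complex \<Rightarrow> complex) \<Rightarrow> bool" where
  "dps G r H \<longleftrightarrow> (\<forall>x y. norm x < r \<longrightarrow> norm y < r \<longrightarrow>
      ((\<lambda>p. G p * x ^ fst p * y ^ snd p) has_sum H x y) UNIV)"

lemma powser_deriv_coeff:
  fixes a :: "nat \<Rightarrow> complex"
  assumes r: "r > 0" and S: "\<And>z. norm z < r \<Longrightarrow> (\<lambda>n. a n * z ^ n) sums g z"
  shows "(deriv ^^ n) g 0 = fact n * a n"
proof -
  define F where "F = Abs_fps a"
  have "fps_conv_radius F \<ge> ereal r"
    unfolding fps_conv_radius_def F_def fps_nth_Abs_fps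
  proof (rule conv_radius_geI_ex')
    fix s :: real assume "0 < s" "ereal s < ereal r"
    hence "norm (of_real s :: complex) < r" by auto
    from S[OF this] show "summable (\<lambda>n. a n * of_real s ^ n)" by (auto simp: sums_iff)
  qed
  hence pos: "fps_conv_radius F > 0" using r by (meson ereal_less(2) order_less_le_trans)
  have "eventually (\<lambda>z. z \<in> ball 0 r) (nhds (0::complex))"
    using r by (intro eventually_nhds_in_open) auto
  hence "eventually (\<lambda>z. eval_fps F z = g z) (nhds 0)"
  proof (rule eventually_mono)
    fix z :: complex assume "z \<in> ball 0 r"
    hence "norm z < r" by auto
    from S[OF this] show "eval_fps F z = g z"
      unfolding eval_fps_def F_def fps_nth_Abs_fps by (rule sums_unique[symmetric])
  qed
  hence "g has_fps_expansion F" using pos by (simp add: has_fps_expansion_def)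
  from fps_nth_fps_expansion[OF this, of n] show ?thesis
    by (simp add: F_def field_simps)
qed

lemma dps_swap:
  assumes "((\<lambda>p. G p * x ^ fst p * y ^ snd p) has_sum s) UNIV"
  shows "((\<lambda>(k,j). G (j,k) * x ^ j * y ^ k) has_sum s) UNIV"
proof -
  have "bij_betw prod.swap (UNIV :: (nat \<times> nat) set) UNIV"
    by (simp add: bij_betw_def inj_on_def)
  from has_sum_reindex_bij_betw[OF this, of "\<lambda>p. G p * x ^ fst p * y ^ snd p" s] assms
  have "((\<lambda>p. G (prod.swap p) * x ^ fst (prod.swap p) * y ^ snd (prod.swap p)) has_sum s) UNIV"
    by simp
  thus ?thesis by (simp add: case_prod_unfold prod.swap_def)
qed

lemma dps_coeff:
  assumes r: "r > 0" and D: "dps G r H"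
  shows "(deriv ^^ j) (\<lambda>X. (deriv ^^ k) (\<lambda>Y. H X Y) 0) 0 / (fact j * fact k) = G (j, k)"
proof -
  define h where "h k X = infsum (\<lambda>j. G (j,k) * X ^ j) UNIV" for k X
  define y0 :: complex where "y0 = of_real (r/2)"
  have y0: "norm y0 < r" "y0 \<noteq> 0" using r by (auto simp: y0_def)
  have hs: "((\<lambda>j. G (j,k) * X ^ j) has_sum h k X) UNIV" if X: "norm X < r" for X k
  proof -
    have "((\<lambda>(k,j). G (j,k) * X ^ j * y0 ^ k) has_sum H X y0) UNIV"
      using D X y0 unfolding dps_def by (intro dps_swap) auto
    hence "(\<lambda>(k,j). G (j,k) * X ^ j * y0 ^ k) summable_on Sigma UNIV (\<lambda>_. UNIV)"
      by (auto simp: has_sum_imp_summable)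
    from summable_on_SigmaD1[where f="\<lambda>k j. G (j,k) * X ^ j * y0 ^ k", OF this]
    have "(\<lambda>j. G (j,k) * X ^ j * y0 ^ k) summable_on UNIV" by auto
    hence "(\<lambda>j. G (j,k) * X ^ j) summable_on UNIV"
      using summable_on_cmult_left'[of "y0 ^ k" "\<lambda>j. G (j,k) * X ^ j" UNIV] y0 by auto
    thus ?thesis unfolding h_def by (rule has_sum_infsum)
  qed
  have outer: "(\<lambda>k. h k X * Y ^ k) sums H X Y" if X: "norm X < r" and Y: "norm Y < r" for X Y
  proof -
    have "((\<lambda>(k,j). G (j,k) * X ^ j * Y ^ k) has_sum H X Y) (Sigma UNIV (\<lambda>_. UNIV))"
      using D X Y unfolding dps_def by (auto intro: dps_swap)
    hence "((\<lambda>k. h k X * Y ^ k) has_sum H X Y) UNIV"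
      by (rule has_sum_Sigma') (auto intro: has_sum_cmult_left hs[OF X])
    thus ?thesis by (rule has_sum_imp_sums)
  qed
  have inner: "(deriv ^^ k) (\<lambda>Y. H X Y) 0 = fact k * h k X" if X: "norm X < r" for X k
    by (rule powser_deriv_coeff[OF r outer[OF X]])
  have "(\<lambda>j. (fact k * G (j,k)) * X ^ j) sums (deriv ^^ k) (\<lambda>Y. H X Y) 0"
    if X: "norm X < r" for X
  proof -
    have "(\<lambda>j. fact k * (G (j,k) * X ^ j)) sums (fact k * h k X)"
      using hs[OF X, THEN has_sum_imp_sums] by (rule sums_mult)
    thus ?thesis using inner[OF X] by (simp add: mult.assoc)
  qed
  from powser_deriv_coeff[OF r this, of j]
  show ?thesis by (simp add: field_simps)
qed

lemma dps_mono: "dps G r H \<Longrightarrow> r' \<le> r \<Longrightarrow> dps G r' H"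
  unfolding dps_def by auto

lemma dps_cong:
  assumes "dps G r H" "\<And>p. G p = G' p" "\<And>x y. norm x < r \<Longrightarrow> norm y < r \<Longrightarrow> H x y = H' x y"
  shows "dps G' r H'"
proof -
  have "G = G'" using assms(2) by auto
  thus ?thesis using assms(1,3) unfolding dps_def by simp
qed

lemma dps_add:
  assumes "dps G1 r H1" "dps G2 r H2"
  shows "dps (\<lambda>p. G1 p + G2 p) r (\<lambda>x y. H1 x y + H2 x y)"
  unfolding dps_def
proof (intro allI impI)
  fix x y :: complex assume xy: "norm x < r" "norm y < r"
  from has_sum_add[OF assms(1)[unfolded dps_def, rule_format, OF xy] assms(2)[unfolded dps_def, rule_format, OF xy]]
  show "((\<lambda>p. (G1 p + G2 p) * x ^ fst p * y ^ snd p) has_sum H1 x y + H2 x y) UNIV"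
    by (simp add: algebra_simps)
qed

lemma dps_cmult:
  assumes "dps G r H"
  shows "dps (\<lambda>p. c * G p) r (\<lambda>x y. c * H x y)"
  unfolding dps_def
proof (intro allI impI)
  fix x y :: complex assume xy: "norm x < r" "norm y < r"
  from has_sum_cmult_right[OF assms(1)[unfolded dps_def, rule_format, OF xy], of c]
  show "((\<lambda>p. c * G p * x ^ fst p * y ^ snd p) has_sum c * H x y) UNIV"
    by (simp add: algebra_simps)
qed

lemma dps_diff:
  assumes "dps G1 r H1" "dps G2 r H2"
  shows "dps (\<lambda>p. G1 p - G2 p) r (\<lambda>x y. H1 x y - H2 x y)"
  by (rule dps_cong[OF dps_add[OF assms(1) dps_cmult[OF assms(2), of "-1"]]]) auto

lemma dps_scale:
  assumes "dps G r H" "norm \<alpha> \<le> 1" "norm \<beta> \<le> 1"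
  shows "dps (\<lambda>p. G p * \<alpha> ^ fst p * \<beta> ^ snd p) r (\<lambda>x y. H (x * \<alpha>) (y * \<beta>))"
  unfolding dps_def
proof (intro allI impI)
  fix x y :: complex assume xy: "norm x < r" "norm y < r"
  have "norm (x * \<alpha>) \<le> norm x" unfolding norm_mult using assms by (intro mult_left_le) auto
  hence "norm (x * \<alpha>) < r" using xy by linarith
  moreover have "norm (y * \<beta>) \<le> norm y" unfolding norm_mult using assms by (intro mult_left_le) auto
  hence "norm (y * \<beta>) < r" using xy by linarith
  ultimately have "((\<lambda>p. G p * (x * \<alpha>) ^ fst p * (y * \<beta>) ^ snd p) has_sum H (x * \<alpha>) (y * \<beta>)) UNIV"
    using assms(1) unfolding dps_def by auto
  thus "((\<lambda>p. G p * \<alpha> ^ fst p * \<beta> ^ snd p * x ^ fst p * y ^ snd p) has_sum H (x * \<alpha>) (y * \<beta>)) UNIV"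
    by (simp add: power_mult_distrib algebra_simps)
qed

lemma dps_shiftx:
  assumes "dps G r H"
  shows "dps (\<lambda>p. if fst p = 0 then 0 else G (fst p - 1, snd p)) r (\<lambda>x y. x * H x y)"
  unfolding dps_def
proof (intro allI impI)
  fix x y :: complex assume xy: "norm x < r" "norm y < r"
  define g where "g = (\<lambda>p. (if fst p = 0 then 0 else G (fst p - 1, snd p)) * x ^ fst p * y ^ snd p)"
  define h where "h = (\<lambda>p::nat\<times>nat. (Suc (fst p), snd p))"
  have "inj h" unfolding h_def inj_def by auto
  have "((\<lambda>p. x * (G p * x ^ fst p * y ^ snd p)) has_sum x * H x y) UNIV"
    using assms xy unfolding dps_def by (auto intro: has_sum_cmult_right)
  hence "((g \<circ> h) has_sum x * H x y) UNIV"
    by (simp add: g_def h_def o_def algebra_simps)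
  hence "(g has_sum x * H x y) (h ` UNIV)"
    using has_sum_reindex[OF \<open>inj h\<close>] by blast
  moreover have "h ` UNIV = {p. fst p \<noteq> 0}"
    unfolding h_def
  proof (intro set_eqI iffI)
    fix p :: "nat \<times> nat" assume "p \<in> {p. fst p \<noteq> 0}"
    hence "p = (Suc (fst p - 1), snd p)" by (cases p) auto
    thus "p \<in> range (\<lambda>p. (Suc (fst p), snd p))" by (metis (no_types, lifting) fst_conv rangeI snd_conv)
  qed auto
  ultimately have "(g has_sum x * H x y) {p. fst p \<noteq> 0}" by simp
  thus "(g has_sum x * H x y) UNIV"
    by (subst (asm) has_sum_cong_neutral[of UNIV _ g]) (auto simp: g_def)
qed

lemma dps_shifty:
  assumes "dps G r H"
  shows "dps (\<lambda>p. if snd p = 0 then 0 else G (fst p, snd p - 1)) r (\<lambda>x y. y * H x y)"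
  unfolding dps_def
proof (intro allI impI)
  fix x y :: complex assume xy: "norm x < r" "norm y < r"
  define g where "g = (\<lambda>p. (if snd p = 0 then 0 else G (fst p, snd p - 1)) * x ^ fst p * y ^ snd p)"
  define h where "h = (\<lambda>p::nat\<times>nat. (fst p, Suc (snd p)))"
  have "inj h" unfolding h_def inj_def by auto
  have "((\<lambda>p. y * (G p * x ^ fst p * y ^ snd p)) has_sum y * H x y) UNIV"
    using assms xy unfolding dps_def by (auto intro: has_sum_cmult_right)
  hence "((g \<circ> h) has_sum y * H x y) UNIV"
    by (simp add: g_def h_def o_def algebra_simps)
  hence "(g has_sum y * H x y) (h ` UNIV)"
    using has_sum_reindex[OF \<open>inj h\<close>] by blast
  moreover have "h ` UNIV = {p. snd p \<noteq> 0}"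
    unfolding h_def
  proof (intro set_eqI iffI)
    fix p :: "nat \<times> nat" assume "p \<in> {p. snd p \<noteq> 0}"
    hence "p = (fst p, Suc (snd p - 1))" by (cases p) auto
    thus "p \<in> range (\<lambda>p. (fst p, Suc (snd p)))" by (metis (no_types, lifting) fst_conv rangeI snd_conv)
  qed auto
  ultimately have "(g has_sum y * H x y) {p. snd p \<noteq> 0}" by simp
  thus "(g has_sum y * H x y) UNIV"
    by (subst (asm) has_sum_cong_neutral[of UNIV _ g]) (auto simp: g_def)
qed

lemma dps_unique:
  assumes "r > 0" "dps G r H" "dps G' r H"
  shows "G p = G' p"
proof -
  have "G (fst p, snd p) = G' (fst p, snd p)"
    using trans[OF sym[OF dps_coeff[OF assms(1,2), of "fst p" "snd p"]] dps_coeff[OF assms(1,3), of "fst p" "snd p"]] .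
  thus ?thesis by simp
qed

lemma dps_eqI:
  assumes "dps G r H" "dps G r H'" "norm x < r" "norm y < r"
  shows "H x y = H' x y"
  using has_sum_unique[OF assms(1)[unfolded dps_def, rule_format, OF assms(3,4)]
     assms(2)[unfolded dps_def, rule_format, OF assms(3,4)]] .



definition Gc :: "(nat\<times>nat\<times>nat\<times>nat\<times>nat\<times>nat\<times>nat \<Rightarrow> complex) \<Rightarrow> complex \<Rightarrow> complex \<Rightarrow> complex \<Rightarrow> complex \<Rightarrow> complex \<Rightarrow> nat\<times>nat \<Rightarrow> complex" where
  "Gc C a b c d e p = infsum (\<lambda>(i1,i2,i3,i4,i5). C (i1,i2,i3,i4,i5,fst p,snd p) * a^i1*b^i2*c^i3*d^i4*e^i5) UNIV"

lemma stepA: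
  assumes H: "\<And>x y. norm x < r \<Longrightarrow> norm y < r \<Longrightarrow> ((\<lambda>(i1, i2, i3, i4, i5, i6, i7).
               C (i1, i2, i3, i4, i5, i6, i7) * a ^ i1 * b ^ i2 * c ^ i3 * d ^ i4 * e ^ i5
                 * x ^ i6 * y ^ i7) has_sum f a b c d e x y) UNIV"
  shows "dps (Gc C a b c d e) r (f a b c d e)"
  unfolding dps_def
proof (intro allI impI)
  fix x y :: complex assume xy: "norm x < r" "norm y < r"
  define T where "T = (\<lambda>(i1, i2, i3, i4, i5, i6, i7).
               C (i1, i2, i3, i4, i5, i6, i7) * a ^ i1 * b ^ i2 * c ^ i3 * d ^ i4 * e ^ i5
                 * x ^ i6 * y ^ (i7::nat))"
  define P where "P p = (\<lambda>(i1,i2,i3,i4,i5). C (i1,i2,i3,i4,i5,fst p,snd p) * a^i1*b^i2*c^i3*d^i4*e^i5)" for p :: "nat\<times>nat"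
  define W where "W p i = P p i * (x ^ fst p * y ^ snd p)" for p i
  define j7 where "j7 = (\<lambda>(p::nat\<times>nat, (i1::nat,i2::nat,i3::nat,i4::nat,i5::nat)). (i1,i2,i3,i4,i5,fst p,snd p))"
  define i7 where "i7 = (\<lambda>(i1::nat,i2::nat,i3::nat,i4::nat,i5::nat,i6::nat,i7::nat). ((i6,i7),(i1,i2,i3,i4,i5)))"
  have "(T has_sum f a b c d e x y) UNIV" using H[OF xy] unfolding T_def .
  moreover have "((\<lambda>(p,i). W p i) has_sum f a b c d e x y) UNIV \<longleftrightarrow> (T has_sum f a b c d e x y) UNIV"
    by (rule has_sum_reindex_bij_witness[of UNIV i7 j7 UNIV T])
       (auto simp: i7_def j7_def T_def W_def P_def split: prod.splits)
  ultimately have all: "((\<lambda>(p,i). W p i) has_sum f a b c d e x y) (Sigma UNIV (\<lambda>_. UNIV))" by simp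
  have fib: "((\<lambda>i. W p i) has_sum (Gc C a b c d e p * x ^ fst p * y ^ snd p)) UNIV" for p
  proof -
    have "W p summable_on UNIV"
      using summable_on_SigmaD1[where f=W, OF has_sum_imp_summable[OF all]] by auto
    hence "(W p has_sum infsum (W p) UNIV) UNIV" by (rule has_sum_infsum)
    moreover have "infsum (W p) UNIV = Gc C a b c d e p * x ^ fst p * y ^ snd p"
      unfolding W_def[abs_def] infsum_cmult_left' by (simp add: Gc_def P_def mult.assoc)
    ultimately show ?thesis by simp
  qed
  show "((\<lambda>p. Gc C a b c d e p * x ^ fst p * y ^ snd p) has_sum f a b c d e x y) UNIV"
    by (rule has_sum_Sigma'[OF all]) (use fib in \<open>simp add: eta_contract_eq\<close>)
qed



definition Lc :: "complex \<Rightarrow> complex \<Rightarrow> complex \<Rightarrow> nat \<Rightarrow> complex" where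
  "Lc Q d e k = 1 - Q^k - (d+e)/Q*(Q^k - Q^(2*k)) + d*e/Q^2*(Q^(2*k) - Q^(3*k))"

definition Mc :: "complex \<Rightarrow> complex \<Rightarrow> complex \<Rightarrow> complex \<Rightarrow> nat \<Rightarrow> nat \<Rightarrow> complex" where
  "Mc Q a b c j k = (1 - Q^j) - (a+b+c)*(Q^k - Q^j*Q^k) + (a*b+a*c+b*c)*(Q^(2*k) - Q^j*Q^(2*k))
      - a*b*c*(Q^(3*k) - Q^j*Q^(3*k))"

lemma pow2k: "(Q::complex)^(2*k) = (Q^k)^2" by (metis power_mult mult.commute)
lemma pow3k: "(Q::complex)^(3*k) = (Q^k)^3" by (metis power_mult mult.commute)

lemma Lc_Suc:
  assumes "Q \<noteq> 0"
  shows "Lc Q d e (Suc k) = (1 - Q * Q^k) * (1 - d * Q^k) * (1 - e * Q^k)"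
proof -
  define t where "t = Q^k"
  have "Lc Q d e (Suc k) = 1 - Q*t - (d+e)/Q*(Q*t - (Q*t)^2) + d*e/Q^2*((Q*t)^2 - (Q*t)^3)"
    unfolding Lc_def pow2k pow3k t_def by simp
  also have "\<dots> = (1 - Q * t) * (1 - d * t) * (1 - e * t)"
    using assms by (simp add: field_simps power2_eq_square power3_eq_cube)
  finally show ?thesis by (simp add: t_def)
qed

lemma Lc_0: "Lc Q d e 0 = 0" by (simp add: Lc_def)

lemma Mc_eq: "Mc Q a b c j k = (1 - Q^j) * (1 - a * Q^k) * (1 - b * Q^k) * (1 - c * Q^k)"
  unfolding Mc_def pow2k pow3k by (simp add: algebra_simps power2_eq_square power3_eq_cube)

lemma Mc_0: "Mc Q a b c 0 k = 0" by (simp add: Mc_def)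

lemma qpoch_0[simp]: "qpoch \<alpha> q 0 = 1" by (simp add: qpoch_def)

lemma qpoch_Suc: "qpoch \<alpha> q (Suc n) = qpoch \<alpha> q n * (1 - \<alpha> * complex_of_real q ^ n)"
  by (simp add: qpoch_def)

lemma factor_nz:
  assumes "norm \<alpha> < 1" "0 < q" "q < 1"
  shows "1 - \<alpha> * complex_of_real q ^ n \<noteq> 0"
proof
  assume "1 - \<alpha> * complex_of_real q ^ n = 0"
  hence "norm (\<alpha> * complex_of_real q ^ n) = 1" by (metis eq_iff_diff_eq_0 norm_one)
  moreover have "norm (\<alpha> * complex_of_real q ^ n) = norm \<alpha> * q ^ n"
    using assms by (simp add: norm_mult norm_power)
  moreover have "norm \<alpha> * q ^ n \<le> norm \<alpha>"
    using assms by (intro mult_left_le power_le_one) auto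
  ultimately show False using assms by linarith
qed

lemma qpoch_nz:
  assumes "norm \<alpha> < 1" "0 < q" "q < 1"
  shows "qpoch \<alpha> q n \<noteq> 0"
  unfolding qpoch_def using factor_nz[OF assms] by auto

lemma qpochQ_nz:
  assumes "0 < q" "q < 1"
  shows "qpoch (complex_of_real q) q n \<noteq> 0"
  using assms by (intro qpoch_nz) auto

lemma factorQ_nz:
  assumes "0 < q" "q < 1"
  shows "1 - complex_of_real q * complex_of_real q ^ n \<noteq> 0"
  using assms by (intro factor_nz) auto

lemma phi_coeff_0:
  assumes "0 < q" "q < 1"
  shows "phi_coeff q a b c d e n 0 = 1"
  using qpochQ_nz[OF assms, of n] by (simp add: phi_coeff_def qbinom_def)

lemma cancel_aux: "(F::complex) \<noteq> 0 \<Longrightarrow> x / (D*F) * (g*F) = x*g/D"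
  by (cases "D=0") (simp_all add: field_simps)

lemma key_identity:
  assumes q: "0 < q" "q < 1" and de: "norm d < 1" "norm e < 1"
  shows "phi_coeff q a b c d e (Suc (j+k)) (Suc k) * Lc (complex_of_real q) d e (Suc k)
       = phi_coeff q a b c d e (Suc (j+k)) k * Mc (complex_of_real q) a b c (Suc j) k"
proof -
  define Q where "Q = complex_of_real q"
  have Q0: "Q \<noteq> 0" using q by (simp add: Q_def)
  have nz: "qpoch Q q k \<noteq> 0" "qpoch Q q j \<noteq> 0" "1 - Q * Q^k \<noteq> 0" "1 - Q * Q^j \<noteq> 0"
    "qpoch d q k \<noteq> 0" "qpoch e q k \<noteq> 0" "1 - d * Q^k \<noteq> 0" "1 - e * Q^k \<noteq> 0"
    using qpochQ_nz[OF q] factorQ_nz[OF q] qpoch_nz[OF de(1) q] qpoch_nz[OF de(2) q]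
      factor_nz[OF de(1) q] factor_nz[OF de(2) q] unfolding Q_def by auto
  have s1: "Suc (j+k) - Suc k = j" "Suc (j+k) - k = Suc j" by auto
  define n where "n = Suc (j+k)"
  define B1 where "B1 = qbinom q n (Suc k)"
  define B0 where "B0 = qbinom q n k"
  define P where "P = qpoch a q k * qpoch b q k * qpoch c q k"
  define X where "X = (1 - a * Q^k) * (1 - b * Q^k) * (1 - c * Q^k)"
  define D where "D = qpoch d q k * qpoch e q k"
  have bstep: "B1 * (1 - Q * Q^k) = B0 * (1 - Q * Q^j)"
  proof -
    have e1: "B1 = qpoch Q q n / (qpoch Q q k * (1 - Q * Q^k) * qpoch Q q j)"
      unfolding B1_def qbinom_def n_def s1 qpoch_Suc Q_def ..
    have e2: "B0 = qpoch Q q n / (qpoch Q q k * (qpoch Q q j * (1 - Q * Q^j)))"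
      unfolding B0_def qbinom_def n_def s1 qpoch_Suc Q_def ..
    have "B1 * (1 - Q * Q^k) = qpoch Q q n / (qpoch Q q k * qpoch Q q j)"
      unfolding e1 using nz(3) by simp
    also have "\<dots> = B0 * (1 - Q * Q^j)"
      unfolding e2 using nz(4) by (simp add: mult.assoc)
    finally show ?thesis .
  qed
  have L: "phi_coeff q a b c d e n (Suc k) * Lc Q d e (Suc k)
      = B1 * (P * X) / (D * (1 - d * Q^k) * (1 - e * Q^k)) * ((1 - Q * Q^k) * (1 - d * Q^k) * (1 - e * Q^k))"
    unfolding Q_def phi_coeff_def B1_def P_def X_def D_def Lc_Suc[OF Q0[unfolded Q_def]] qpoch_Suc
    by (simp only: mult_ac)
  also have "\<dots> = B1 * (P * X) / (D * ((1 - d * Q^k) * (1 - e * Q^k))) * ((1 - Q * Q^k) * ((1 - d * Q^k) * (1 - e * Q^k)))"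
    by (simp only: mult.assoc)
  also have "\<dots> = B1 * (P * X) * (1 - Q * Q^k) / D"
    by (rule cancel_aux) (use nz in simp)
  also have "\<dots> = (B1 * (1 - Q * Q^k)) * P * X / D"
    by (simp only: mult_ac)
  also have "\<dots> = (B0 * (1 - Q * Q^j)) * P * X / D" unfolding bstep ..
  also have "\<dots> = phi_coeff q a b c d e n k * Mc Q a b c (Suc j) k"
    unfolding phi_coeff_def B0_def P_def X_def D_def Mc_eq Q_def
    by (simp only: mult_ac times_divide_eq_left times_divide_eq_right power_Suc)
  finally show ?thesis unfolding n_def Q_def .
qed

lemma rec_phi:
  assumes q: "0 < q" "q < 1" and de: "norm d < 1" "norm e < 1"
    and rec: "\<And>j k. G (j, Suc k) * Lc (complex_of_real q) d e (Suc k) = G (Suc j, k) * Mc (complex_of_real q) a b c (Suc j) k"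
  shows "G (j,k) = G (j+k, 0) * phi_coeff q a b c d e (j+k) k"
proof (induction k arbitrary: j)
  case 0
  then show ?case using phi_coeff_0[OF q] by simp
next
  case (Suc k)
  define Q where "Q = complex_of_real q"
  have Q0: "Q \<noteq> 0" using q by (simp add: Q_def)
  have Lnz: "Lc Q d e (Suc k) \<noteq> 0"
    unfolding Lc_Suc[OF Q0] using factorQ_nz[OF q] factor_nz[OF de(1) q] factor_nz[OF de(2) q]
    by (simp add: Q_def)
  have "G (j, Suc k) = G (Suc j, k) * Mc Q a b c (Suc j) k / Lc Q d e (Suc k)"
    using rec[of j k] Lnz unfolding Q_def by (simp add: field_simps)
  also have "\<dots> = G (Suc (j+k), 0) * (phi_coeff q a b c d e (Suc (j+k)) k * Mc Q a b c (Suc j) k) / Lc Q d e (Suc k)"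
    using Suc.IH[of "Suc j"] by simp
  also have "\<dots> = G (Suc (j+k), 0) * phi_coeff q a b c d e (Suc (j+k)) (Suc k)"
  proof -
    have ki: "phi_coeff q a b c d e (Suc (j+k)) k * Mc Q a b c (Suc j) k
       = phi_coeff q a b c d e (Suc (j+k)) (Suc k) * Lc Q d e (Suc k)"
      using key_identity[OF q de, of a b c j k] unfolding Q_def by simp
    show ?thesis unfolding ki using Lnz by simp
  qed
  finally show ?case by simp
qed

lemma phi_rec:
  assumes q: "0 < q" "q < 1" and de: "norm d < 1" "norm e < 1"
    and G: "\<And>j k. G (j,k) = \<mu> (j+k) * phi_coeff q a b c d e (j+k) k"
  shows "G (j, Suc k) * Lc (complex_of_real q) d e (Suc k) = G (Suc j, k) * Mc (complex_of_real q) a b c (Suc j) k"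
  using key_identity[OF q de, of a b c j k] unfolding G by simp



lemma qeq_iff:
  assumes q: "0 < q" "q < 1" and r: "r > 0" and D: "dps G r (f a b c d e)"
  shows "(\<forall>x y. norm x < r \<longrightarrow> norm y < r \<longrightarrow> qdiff_eq q f a b c d e x y) \<longleftrightarrow>
    (\<forall>j k. G (j, Suc k) * Lc (complex_of_real q) d e (Suc k) = G (Suc j, k) * Mc (complex_of_real q) a b c (Suc j) k)"
proof -
  define Q where "Q = complex_of_real q"
  define F where "F = f a b c d e"
  have nQ: "norm (Q^m) \<le> 1" for m using q by (simp add: Q_def norm_power power_le_one)
  have nQ1: "norm Q \<le> 1" using nQ[of 1] by simp
  have Fy: "dps (\<lambda>p. G p * Q^(m * snd p)) r (\<lambda>x y. F x (y*Q^m))" for m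
  proof -
    have s: "dps (\<lambda>p. G p * 1^fst p * (Q^m)^snd p) r (\<lambda>x y. f a b c d e (x*1) (y*Q^m))"
      by (rule dps_scale[OF D]) (simp_all add: nQ)
    show ?thesis using s by (rule dps_cong) (auto simp: F_def power_mult)
  qed
  have Fxy: "dps (\<lambda>p. G p * Q^fst p * Q^(m * snd p)) r (\<lambda>x y. F (x*Q) (y*Q^m))" for m
  proof -
    have s: "dps (\<lambda>p. G p * Q^fst p * (Q^m)^snd p) r (\<lambda>x y. f a b c d e (x*Q) (y*Q^m))"
      by (rule dps_scale[OF D]) (simp_all add: nQ nQ1)
    show ?thesis using s by (rule dps_cong) (auto simp: F_def power_mult)
  qed
  have D': "dps G r F" using D unfolding F_def .
  define A where "A x y = F x y - F x (y*Q) - (d+e)/Q*(F x (y*Q) - F x (y*Q^2)) + d*e/Q^2*(F x (y*Q^2) - F x (y*Q^3))" for x y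
  define B where "B x y = (F x y - F (x*Q) y) - (a+b+c)*(F x (y*Q) - F (x*Q) (y*Q))
      + (a*b+a*c+b*c)*(F x (y*Q^2) - F (x*Q) (y*Q^2)) - a*b*c*(F x (y*Q^3) - F (x*Q) (y*Q^3))" for x y
  have LA: "dps (\<lambda>p. G p * Lc Q d e (snd p)) r A"
    using dps_add[OF dps_diff[OF dps_diff[OF D' Fy[of 1]] dps_cmult[OF dps_diff[OF Fy[of 1] Fy[of 2]], where c="(d+e)/Q"]]
       dps_cmult[OF dps_diff[OF Fy[of 2] Fy[of 3]], where c="d*e/Q^2"]]
    by (rule dps_cong) (simp_all add: A_def Lc_def algebra_simps)
  have LB: "dps (\<lambda>p. G p * Mc Q a b c (fst p) (snd p)) r B"
    using dps_diff[OF dps_add[OF dps_diff[OF dps_diff[OF D' Fxy[of 0]]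
         dps_cmult[OF dps_diff[OF Fy[of 1] Fxy[of 1]], where c="a+b+c"]]
         dps_cmult[OF dps_diff[OF Fy[of 2] Fxy[of 2]], where c="a*b+a*c+b*c"]]
         dps_cmult[OF dps_diff[OF Fy[of 3] Fxy[of 3]], where c="a*b*c"]]
    by (rule dps_cong) (simp_all add: B_def Mc_def algebra_simps)
  have eq: "qdiff_eq q f a b c d e x y \<longleftrightarrow> x * A x y = y * B x y" for x y
    by (simp add: qdiff_eq_def Let_def A_def B_def Q_def F_def)
  note SX = dps_shiftx[OF LA]
  note SY = dps_shifty[OF LB]
  show ?thesis unfolding Q_def[symmetric]
  proof
    assume H: "\<forall>x y. norm x < r \<longrightarrow> norm y < r \<longrightarrow> qdiff_eq q f a b c d e x y"
    have SY': "dps (\<lambda>p. if snd p = 0 then 0 else G (fst p, snd p - 1) * Mc Q a b c (fst (fst p, snd p - 1)) (snd (fst p, snd p - 1))) r (\<lambda>x y. x * A x y)"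
      using SY by (rule dps_cong) (use H eq in auto)
    show "\<forall>j k. G (j, Suc k) * Lc Q d e (Suc k) = G (Suc j, k) * Mc Q a b c (Suc j) k"
    proof (intro allI)
      fix j k
      show "G (j, Suc k) * Lc Q d e (Suc k) = G (Suc j, k) * Mc Q a b c (Suc j) k"
        using dps_unique[OF r SX SY', of "(Suc j, Suc k)"] by simp
    qed
  next
    assume R: "\<forall>j k. G (j, Suc k) * Lc Q d e (Suc k) = G (Suc j, k) * Mc Q a b c (Suc j) k"
    have ce: "(if fst p = 0 then 0 else G (fst p - 1, snd p) * Lc Q d e (snd (fst p - 1, snd p))) =
       (if snd p = 0 then 0 else G (fst p, snd p - 1) * Mc Q a b c (fst (fst p, snd p - 1)) (snd (fst p, snd p - 1)))" for p
    proof (cases p)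
      case (Pair j k)
      show ?thesis
      proof (cases j)
        case 0 thus ?thesis using Pair by (simp add: Mc_0)
      next
        case (Suc j')
        show ?thesis
        proof (cases k)
          case 0 thus ?thesis using Pair Suc by (simp add: Lc_0)
        next
          case (Suc k')
          thus ?thesis using Pair \<open>j = Suc j'\<close> R by simp
        qed
      qed
    qed
    have SX': "dps (\<lambda>p. if snd p = 0 then 0 else G (fst p, snd p - 1) * Mc Q a b c (fst (fst p, snd p - 1)) (snd (fst p, snd p - 1))) r (\<lambda>x y. x * A x y)"
      using SX by (rule dps_cong) (use ce in auto)
    show "\<forall>x y. norm x < r \<longrightarrow> norm y < r \<longrightarrow> qdiff_eq q f a b c d e x y"
      using dps_eqI[OF SX' SY] eq by auto
  qed
qed



lemma dps_y0_sums:
  assumes D: "dps G r H" and x: "norm x < r" and r: "r > 0"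
  shows "(\<lambda>n. G (n,0) * x ^ n) sums H x 0"
proof -
  have "((\<lambda>p. G p * x ^ fst p * 0 ^ snd p) has_sum H x 0) UNIV"
    using D x r unfolding dps_def by auto
  hence "((\<lambda>p. G p * x ^ fst p * 0 ^ snd p) has_sum H x 0) ((\<lambda>n. (n, 0::nat)) ` UNIV)"
    by (subst has_sum_cong_neutral[of UNIV _ "\<lambda>p. G p * x ^ fst p * 0 ^ snd p"]) (auto simp: image_def)
  hence "(((\<lambda>p. G p * x ^ fst p * 0 ^ snd p) \<circ> (\<lambda>n. (n, 0::nat))) has_sum H x 0) UNIV"
    by (subst (asm) has_sum_reindex) (auto simp: inj_def)
  hence "((\<lambda>n. G (n,0) * x ^ n) has_sum H x 0) UNIV" by (simp add: o_def)
  thus ?thesis by (rule has_sum_imp_sums)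
qed

theorem theorem1:
  fixes q :: real and f :: fun7
  assumes q: "0 < q" "q < 1"
    and an: "analytic_near0_7 f"
  shows "((\<exists>r>0. \<forall>a b c d e x y. norm a < r \<and> norm b < r \<and> norm c < r \<and> norm d < r
              \<and> norm e < r \<and> norm x < r \<and> norm y < r \<longrightarrow> qdiff_eq q f a b c d e x y)
          \<longleftrightarrow>
          (\<exists>\<mu> :: nat \<Rightarrow> complex \<Rightarrow> complex \<Rightarrow> complex \<Rightarrow> complex \<Rightarrow> complex \<Rightarrow> complex.
             \<exists>\<rho>>0. \<forall>a b c d e. norm a < \<rho> \<and> norm b < \<rho> \<and> norm c < \<rho> \<and> norm d < \<rho>
                \<and> norm e < \<rho> \<longrightarrow>
               (\<forall>j k. xy_coeff f a b c d e j k = \<mu> (j + k) a b c d e * phi_coeff q a b c d e (j + k) k)))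
       \<and> (\<forall>\<mu> :: nat \<Rightarrow> complex \<Rightarrow> complex \<Rightarrow> complex \<Rightarrow> complex \<Rightarrow> complex \<Rightarrow> complex. \<forall>\<rho>>0.
            (\<forall>a b c d e. norm a < \<rho> \<and> norm b < \<rho> \<and> norm c < \<rho> \<and> norm d < \<rho> \<and> norm e < \<rho> \<longrightarrow>
               (\<forall>j k. xy_coeff f a b c d e j k = \<mu> (j + k) a b c d e * phi_coeff q a b c d e (j + k) k))
            \<longrightarrow> (\<exists>\<rho>'>0. \<forall>a b c d e. norm a < \<rho>' \<and> norm b < \<rho>' \<and> norm c < \<rho>' \<and> norm d < \<rho>' \<and> norm e < \<rho>' \<longrightarrow>
               (\<exists>s>0. \<forall>x. norm x < s \<longrightarrow> (\<lambda>n. \<mu> n a b c d e * x ^ n) sums f a b c d e x 0)))"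
proof -
  obtain r0 C where r0: "r0 > 0" and HC: "\<And>a b c d e x y. norm a < r0 \<Longrightarrow> norm b < r0 \<Longrightarrow> norm c < r0 \<Longrightarrow> norm d < r0
      \<Longrightarrow> norm e < r0 \<Longrightarrow> norm x < r0 \<Longrightarrow> norm y < r0 \<Longrightarrow>
          ((\<lambda>(i1, i2, i3, i4, i5, i6, i7).
               C (i1, i2, i3, i4, i5, i6, i7) * a ^ i1 * b ^ i2 * c ^ i3 * d ^ i4 * e ^ i5
                 * x ^ i6 * y ^ i7) has_sum f a b c d e x y) UNIV"
    using an unfolding analytic_near0_7_def by blast
  have dpsG: "dps (Gc C a b c d e) r0 (f a b c d e)"
    if "norm a < r0" "norm b < r0" "norm c < r0" "norm d < r0" "norm e < r0" for a b c d e
    by (rule stepA) (use that in \<open>intro HC\<close>)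
  have xyG: "xy_coeff f a b c d e j k = Gc C a b c d e (j,k)"
    if "norm a < r0" "norm b < r0" "norm c < r0" "norm d < r0" "norm e < r0" for a b c d e j k
    unfolding xy_coeff_def using dps_coeff[OF r0 dpsG[OF that]] .
  define R where "R = min r0 1"
  have R: "R > 0" "R \<le> r0" "R \<le> 1" using r0 by (auto simp: R_def)
  have part1: "(\<exists>r>0. \<forall>a b c d e x y. norm a < r \<and> norm b < r \<and> norm c < r \<and> norm d < r
              \<and> norm e < r \<and> norm x < r \<and> norm y < r \<longrightarrow> qdiff_eq q f a b c d e x y)
          \<longleftrightarrow>
          (\<exists>\<mu> :: nat \<Rightarrow> complex \<Rightarrow> complex \<Rightarrow> complex \<Rightarrow> complex \<Rightarrow> complex \<Rightarrow> complex.
             \<exists>\<rho>>0. \<forall>a b c d e. norm a < \<rho> \<and> norm b < \<rho> \<and> norm c < \<rho> \<and> norm d < \<rho>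
                \<and> norm e < \<rho> \<longrightarrow>
               (\<forall>j k. xy_coeff f a b c d e j k = \<mu> (j + k) a b c d e * phi_coeff q a b c d e (j + k) k))"
  proof
    assume "\<exists>r>0. \<forall>a b c d e x y. norm a < r \<and> norm b < r \<and> norm c < r \<and> norm d < r
              \<and> norm e < r \<and> norm x < r \<and> norm y < r \<longrightarrow> qdiff_eq q f a b c d e x y"
    then obtain r1 where r1: "r1 > 0" and H1: "\<And>a b c d e x y. norm a < r1 \<Longrightarrow> norm b < r1 \<Longrightarrow> norm c < r1 \<Longrightarrow> norm d < r1
              \<Longrightarrow> norm e < r1 \<Longrightarrow> norm x < r1 \<Longrightarrow> norm y < r1 \<Longrightarrow> qdiff_eq q f a b c d e x y" by blast
    define \<rho> where "\<rho> = min R r1"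
    have \<rho>: "\<rho> > 0" "\<rho> \<le> r0" "\<rho> \<le> 1" "\<rho> \<le> r1" using R r1 by (auto simp: \<rho>_def)
    show "\<exists>\<mu> :: nat \<Rightarrow> complex \<Rightarrow> complex \<Rightarrow> complex \<Rightarrow> complex \<Rightarrow> complex \<Rightarrow> complex.
             \<exists>\<rho>>0. \<forall>a b c d e. norm a < \<rho> \<and> norm b < \<rho> \<and> norm c < \<rho> \<and> norm d < \<rho>
                \<and> norm e < \<rho> \<longrightarrow>
               (\<forall>j k. xy_coeff f a b c d e j k = \<mu> (j + k) a b c d e * phi_coeff q a b c d e (j + k) k)"
    proof (intro exI[of _ "\<lambda>n a b c d e. Gc C a b c d e (n,0)"] exI[of _ \<rho>] conjI allI impI)
      show "\<rho> > 0" by (rule \<rho>)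
      fix a b c d e :: complex and j k :: nat
      assume n: "norm a < \<rho> \<and> norm b < \<rho> \<and> norm c < \<rho> \<and> norm d < \<rho> \<and> norm e < \<rho>"
      have n0: "norm a < r0" "norm b < r0" "norm c < r0" "norm d < r0" "norm e < r0" using n \<rho> by auto
      have D: "dps (Gc C a b c d e) \<rho> (f a b c d e)" using dps_mono[OF dpsG[OF n0]] \<rho> by auto
      have "\<forall>x y. norm x < \<rho> \<longrightarrow> norm y < \<rho> \<longrightarrow> qdiff_eq q f a b c d e x y"
        using n \<rho> by (auto intro!: H1)
      hence rec: "\<forall>j k. Gc C a b c d e (j, Suc k) * Lc (complex_of_real q) d e (Suc k)
          = Gc C a b c d e (Suc j, k) * Mc (complex_of_real q) a b c (Suc j) k"
        using qeq_iff[where f=f and a=a and b=b and c=c and d=d and e=e, OF q \<rho>(1) D] by blast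
      have de: "norm d < 1" "norm e < 1" using n \<rho> by auto
      show "xy_coeff f a b c d e j k = Gc C a b c d e (j + k, 0) * phi_coeff q a b c d e (j + k) k"
        unfolding xyG[OF n0] by (rule rec_phi[OF q de]) (use rec in blast)
    qed
  next
    assume "\<exists>\<mu> :: nat \<Rightarrow> complex \<Rightarrow> complex \<Rightarrow> complex \<Rightarrow> complex \<Rightarrow> complex \<Rightarrow> complex.
             \<exists>\<rho>>0. \<forall>a b c d e. norm a < \<rho> \<and> norm b < \<rho> \<and> norm c < \<rho> \<and> norm d < \<rho>
                \<and> norm e < \<rho> \<longrightarrow>
               (\<forall>j k. xy_coeff f a b c d e j k = \<mu> (j + k) a b c d e * phi_coeff q a b c d e (j + k) k)"
    then obtain \<mu> \<rho> where \<rho>0: "\<rho> > 0" and M: "\<And>a b c d e j k. norm a < \<rho> \<Longrightarrow> norm b < \<rho> \<Longrightarrow> norm c < \<rho> \<Longrightarrow> norm d < \<rho>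
                \<Longrightarrow> norm e < \<rho> \<Longrightarrow> xy_coeff f a b c d e j k = \<mu> (j + k) a b c d e * phi_coeff q a b c d e (j + k) k"
      by blast
    define r' where "r' = min R \<rho>"
    have r': "r' > 0" "r' \<le> r0" "r' \<le> 1" "r' \<le> \<rho>" using R \<rho>0 by (auto simp: r'_def)
    show "\<exists>r>0. \<forall>a b c d e x y. norm a < r \<and> norm b < r \<and> norm c < r \<and> norm d < r
              \<and> norm e < r \<and> norm x < r \<and> norm y < r \<longrightarrow> qdiff_eq q f a b c d e x y"
    proof (intro exI[of _ r'] conjI allI impI)
      show "r' > 0" by (rule r')
      fix a b c d e x y :: complex
      assume n: "norm a < r' \<and> norm b < r' \<and> norm c < r' \<and> norm d < r' \<and> norm e < r' \<and> norm x < r' \<and> norm y < r'"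
      have n0: "norm a < r0" "norm b < r0" "norm c < r0" "norm d < r0" "norm e < r0" using n r' by auto
      have n1: "norm a < \<rho>" "norm b < \<rho>" "norm c < \<rho>" "norm d < \<rho>" "norm e < \<rho>" using n r' by auto
      have D: "dps (Gc C a b c d e) r' (f a b c d e)" using dps_mono[OF dpsG[OF n0]] r' by auto
      have de: "norm d < 1" "norm e < 1" using n r' by auto
      have G: "Gc C a b c d e (j,k) = \<mu> (j+k) a b c d e * phi_coeff q a b c d e (j+k) k" for j k
        using M[OF n1, of j k] xyG[OF n0, of j k] by simp
      have "\<forall>j k. Gc C a b c d e (j, Suc k) * Lc (complex_of_real q) d e (Suc k)
          = Gc C a b c d e (Suc j, k) * Mc (complex_of_real q) a b c (Suc j) k"
        using phi_rec[OF q de, of "Gc C a b c d e", OF G] by blast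
      hence "\<forall>x y. norm x < r' \<longrightarrow> norm y < r' \<longrightarrow> qdiff_eq q f a b c d e x y"
        using qeq_iff[where f=f and a=a and b=b and c=c and d=d and e=e, OF q r'(1) D] by blast
      thus "qdiff_eq q f a b c d e x y" using n by blast
    qed
  qed
  have part2: "\<forall>\<mu> :: nat \<Rightarrow> complex \<Rightarrow> complex \<Rightarrow> complex \<Rightarrow> complex \<Rightarrow> complex \<Rightarrow> complex. \<forall>\<rho>>0.
            (\<forall>a b c d e. norm a < \<rho> \<and> norm b < \<rho> \<and> norm c < \<rho> \<and> norm d < \<rho> \<and> norm e < \<rho> \<longrightarrow>
               (\<forall>j k. xy_coeff f a b c d e j k = \<mu> (j + k) a b c d e * phi_coeff q a b c d e (j + k) k))
            \<longrightarrow> (\<exists>\<rho>'>0. \<forall>a b c d e. norm a < \<rho>' \<and> norm b < \<rho>' \<and> norm c < \<rho>' \<and> norm d < \<rho>' \<and> norm e < \<rho>' \<longrightarrow>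
               (\<exists>s>0. \<forall>x. norm x < s \<longrightarrow> (\<lambda>n. \<mu> n a b c d e * x ^ n) sums f a b c d e x 0))"
  proof (intro allI impI)
    fix \<mu> :: "nat \<Rightarrow> complex \<Rightarrow> complex \<Rightarrow> complex \<Rightarrow> complex \<Rightarrow> complex \<Rightarrow> complex" and \<rho> :: real
    assume \<rho>0: "\<rho> > 0" and M: "\<forall>a b c d e. norm a < \<rho> \<and> norm b < \<rho> \<and> norm c < \<rho> \<and> norm d < \<rho> \<and> norm e < \<rho> \<longrightarrow>
               (\<forall>j k. xy_coeff f a b c d e j k = \<mu> (j + k) a b c d e * phi_coeff q a b c d e (j + k) k)"
    show "\<exists>\<rho>'>0. \<forall>a b c d e. norm a < \<rho>' \<and> norm b < \<rho>' \<and> norm c < \<rho>' \<and> norm d < \<rho>' \<and> norm e < \<rho>' \<longrightarrow>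
               (\<exists>s>0. \<forall>x. norm x < s \<longrightarrow> (\<lambda>n. \<mu> n a b c d e * x ^ n) sums f a b c d e x 0)"
    proof (rule exI[of _ "min \<rho> r0"], intro conjI allI impI)
      show "min \<rho> r0 > 0" using \<rho>0 r0 by simp
      fix a b c d e :: complex
      assume n: "norm a < min \<rho> r0 \<and> norm b < min \<rho> r0 \<and> norm c < min \<rho> r0 \<and> norm d < min \<rho> r0 \<and> norm e < min \<rho> r0"
      have n0: "norm a < r0" "norm b < r0" "norm c < r0" "norm d < r0" "norm e < r0" using n by auto
      have mu: "\<mu> k a b c d e = Gc C a b c d e (k,0)" for k
        using M n xyG[OF n0, of k 0] phi_coeff_0[OF q] by auto
      show "\<exists>s>0. \<forall>x. norm x < s \<longrightarrow> (\<lambda>n. \<mu> n a b c d e * x ^ n) sums f a b c d e x 0"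
        unfolding mu using dps_y0_sums[OF dpsG[OF n0] _ r0] r0 by blast
    qed
  qed
  show ?thesis using part1 part2 by blast
qed


end
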